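(* Let $\Omega=(0,L)^2$ with periodic boundary conditions, $M$ a positive integer, $h=L/M$, and let $\mathbb{V}_h\cong\mathbb{R}^{M^2}$ be the space of real grid functions on the periodic grid $\{(ih,jh):1\le i,j\le M\}$. Let $\Lambda_h$ be the standard five-point central-difference matrix of the Laplacian on this grid with periodic boundary conditions, and let $\varepsilon>0$. Let $0=t_0<t_1<\dots<t_N=T$ be a time grid with steps $\tau_k=t_k-t_{k-1}$, step ratios $r_k=\tau_k/\tau_{k-1}$ for $2\le k\le N$ and $r_1:=0$. Given $u^0\in\mathbb{V}_h$, consider the scheme $$D_2u^n=\varepsilon^2\Lambda_hu^n-f(u^n),\qquad n\ge1,$$ where $f(u)=u^{3}-u$ componentwise, $D_2u^1=(u^1-u^0)/\tau_1$ and, for $n\ge2$, $$D_2u^n=\frac{1+2r_n}{\tau_n(1+r_n)}(u^n-u^{n-1})-\frac{r_n^2}{\tau_n(1+r_n)}(u^{n-1}-u^{n-2}).$$ If $\tau_n<\frac{1+2r_n}{1+r_n}$ for $n\ge1$, then the scheme is uniquely solvable, i.e. for every $n\ge1$, given $u^0,\dots,u^{n-1}$ there exists a unique $u^n\in\mathbb{V}_h$ satisfying the $n$-th equation.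
   Context: $\Lambda_h$ is symmetric and negative semi-definite. Cubes and other nonlinear operations on vectors are taken componentwise. *)

theory Defs
  imports Complex_Main
begin

text \<open>Grid functions on the periodic M x M grid, indices (i,j) with 0 <= i,j < M
  (index i corresponds to the grid point (i+1)h, periodically). Values off the grid are
  fixed to 0, so the space below is isomorphic to R^(M^2).\<close>

type_synonym gridfun = "nat \<times> nat \<Rightarrow> real"

definition grid :: "nat \<Rightarrow> (nat \<times> nat) set" where
  "grid M = {0..<M} \<times> {0..<M}"

definition Vh :: "nat \<Rightarrow> gridfun set" where
  "Vh M = {u. \<forall>p. p \<notin> grid M \<longrightarrow> u p = 0}"

definition lap_h :: "nat \<Rightarrow> real \<Rightarrow> gridfun \<Rightarrow> gridfun" where
  "lap_h M h u = (\<lambda>(i,j). if i < M \<and> j < M then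
      (u ((i + 1) mod M, j) + u ((i + M - 1) mod M, j)
       + u (i, (j + 1) mod M) + u (i, (j + M - 1) mod M) - 4 * u (i, j)) / h\<^sup>2
     else 0)"

definition f_AC :: "real \<Rightarrow> real" where
  "f_AC x = x ^ 3 - x"

definition tau :: "(nat \<Rightarrow> real) \<Rightarrow> nat \<Rightarrow> real" where
  "tau t k = t k - t (k - 1)"

definition ratio :: "(nat \<Rightarrow> real) \<Rightarrow> nat \<Rightarrow> real" where
  "ratio t k = (if k \<le> 1 then 0 else tau t k / tau t (k - 1))"

definition D2 :: "(nat \<Rightarrow> real) \<Rightarrow> nat \<Rightarrow> gridfun \<Rightarrow> (nat \<Rightarrow> gridfun) \<Rightarrow> gridfun" where
  "D2 t n v us = (\<lambda>p.
     if n = 1 then (v p - us 0 p) / tau t 1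
     else (1 + 2 * ratio t n) / (tau t n * (1 + ratio t n)) * (v p - us (n - 1) p)
          - (ratio t n)\<^sup>2 / (tau t n * (1 + ratio t n)) * (us (n - 1) p - us (n - 2) p))"

end

theory Submission imports Defs "HOL-Probability.Discrete_Topology" begin

definition psi :: "real \<Rightarrow> real \<Rightarrow> real" where "psi c x = c * x + x ^ 3"
definition psinv :: "real \<Rightarrow> real \<Rightarrow> real" where "psinv c y = (THE x. psi c x = y)"

lemma psi_diff: "psi c x - psi c y = (x - y) * (c + (x^2 + x*y + y^2))"
  unfolding psi_def by (simp add: algebra_simps power2_eq_square power3_eq_cube)

lemma sq3_nonneg: "x^2 + x*y + y^2 \<ge> (0::real)"
proof -
  have "x^2 + x*y + y^2 = (x + y/2)^2 + 3/4*y^2" by (simp add: algebra_simps power2_eq_square)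
  also have "\<dots> \<ge> 0" by simp
  finally show ?thesis .
qed

lemma psi_lip: assumes "c > 0" shows "c * \<bar>x - y\<bar> \<le> \<bar>psi c x - psi c y\<bar>"
proof -
  have "\<bar>psi c x - psi c y\<bar> = \<bar>x - y\<bar> * (c + (x^2 + x*y + y^2))"
    using psi_diff[of c x y] sq3_nonneg[of x y] assms by (simp add: abs_mult)
  also have "\<dots> \<ge> \<bar>x - y\<bar> * c" using sq3_nonneg[of x y] by (intro mult_left_mono) auto
  finally show ?thesis by (simp add: mult.commute)
qed

lemma psi_inj: assumes "c > 0" "psi c x = psi c y" shows "x = y"
  using psi_lip[OF assms(1), of x y] assms by (simp add: mult_le_0_iff)

lemma psi_surj: assumes "c > 0" shows "\<exists>x. psi c x = y"
proof -
  define x0 where "x0 = \<bar>y\<bar> / c"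
  have x0: "x0 \<ge> 0" "c * x0 = \<bar>y\<bar>" using assms by (auto simp: x0_def)
  have p3: "x0 ^ 3 \<ge> 0" using x0 by simp
  have "psi c (-x0) = - (c * x0) - x0 ^ 3" unfolding psi_def by simp
  then have "psi c (-x0) \<le> y" using x0 p3 abs_ge_minus_self[of y] by linarith
  moreover have "y \<le> psi c x0" using x0 p3 abs_ge_self[of y] unfolding psi_def by linarith
  moreover have "continuous_on {-x0..x0} (psi c)" unfolding psi_def by (intro continuous_intros)
  ultimately show ?thesis using IVT'[of "psi c" "-x0" y x0] x0 by auto
qed

lemma psi_psinv: assumes "c > 0" shows "psi c (psinv c y) = y"
  unfolding psinv_def using psi_surj[OF assms, of y] psi_inj[OF assms]
  by (metis (mono_tags) theI)

lemma psinv_lip: assumes "c > 0" shows "\<bar>psinv c x - psinv c y\<bar> \<le> \<bar>x - y\<bar> / c"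
  using psi_lip[OF assms, of "psinv c x" "psinv c y"] assms
  by (simp add: psi_psinv field_simps)

lemma psinv_eq: assumes "c > 0" shows "psinv c y = x \<longleftrightarrow> psi c x = y"
  using psi_psinv[OF assms] psi_inj[OF assms] by metis

definition nb :: "nat \<Rightarrow> gridfun \<Rightarrow> gridfun" where
  "nb M u = (\<lambda>(i,j). u ((i + 1) mod M, j) + u ((i + M - 1) mod M, j)
       + u (i, (j + 1) mod M) + u (i, (j + M - 1) mod M))"

definition G :: "nat \<Rightarrow> real \<Rightarrow> real \<Rightarrow> gridfun \<Rightarrow> gridfun \<Rightarrow> gridfun" where
  "G M c k \<beta> u = (\<lambda>p. if p \<in> grid M then psinv c (\<beta> p + k * nb M u p) else 0)"

definition E :: "gridfun \<Rightarrow> (nat \<times> nat) discrete \<Rightarrow> real" where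
  "E v = (\<lambda>x. v (of_discrete x))"

definition R :: "((nat \<times> nat) discrete \<Rightarrow>\<^sub>C real) \<Rightarrow> gridfun" where
  "R f = (\<lambda>p. apply_bcontfun f (discrete p))"

lemma G_Vh: "G M c k \<beta> u \<in> Vh M"
  unfolding G_def Vh_def by auto

lemma E_bcont: assumes "v \<in> Vh M" shows "E v \<in> bcontfun"
proof -
  have "range (E v) \<subseteq> insert 0 (v ` grid M)"
    using assms unfolding E_def Vh_def by (auto, metis image_eqI prod.collapse)
  moreover have "finite (grid M)" unfolding grid_def by auto
  ultimately have "bounded (range (E v))"
    by (meson bounded_subset finite_imageI finite_imp_bounded finite_insert)
  moreover have "continuous_on UNIV (E v)"
    using open_discrete by (auto simp: continuous_on_open_invariant)
  ultimately show ?thesis unfolding bcontfun_def by auto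
qed

lemma RE: assumes "v \<in> Vh M" shows "R (Bcontfun (E v)) = v"
  using E_bcont[OF assms] by (auto simp: R_def E_def Bcontfun_inverse fun_eq_iff discrete_inverse)

lemma solv:
  fixes a k :: real and \<beta> :: gridfun
  assumes "a > 1" "k \<ge> 0"
  shows "\<exists>!v. v \<in> Vh M \<and> (\<forall>p\<in>grid M. (a - 1 + 4*k) * v p + v p ^ 3 = \<beta> p + k * nb M v p)"
proof -
  define c where "c = a - 1 + 4*k"
  have c: "c > 0" "c > 4*k" using assms by (auto simp: c_def)
  define T where "T = (\<lambda>f. Bcontfun (E (G M c k \<beta> (R f))))"
  have Tapp: "apply_bcontfun (T f) = E (G M c k \<beta> (R f))" for f
    unfolding T_def using E_bcont[OF G_Vh] by (simp add: Bcontfun_inverse)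
  have RT: "R (T f) = G M c k \<beta> (R f)" for f
    unfolding T_def by (rule RE[OF G_Vh])
  define q where "q = 4*k/c"
  have q: "0 \<le> q" "q < 1" using c assms by (auto simp: q_def)
  have contr: "dist (T f) (T g) \<le> q * dist f g" for f g
  proof (rule dist_bound)
    fix z
    have d: "\<bar>R f y - R g y\<bar> \<le> dist f g" for y
      using dist_bounded[of f "discrete y" g] by (simp add: dist_real_def R_def)
    have Gd: "\<bar>G M c k \<beta> (R f) x - G M c k \<beta> (R g) x\<bar> \<le> q * dist f g" for x
    proof -
    have nbd: "\<bar>nb M (R f) x - nb M (R g) x\<bar> \<le> 4 * dist f g"
      unfolding nb_def using d[of "((fst x + 1) mod M, snd x)"] d[of "((fst x + M - 1) mod M, snd x)"]
        d[of "(fst x, (snd x + 1) mod M)"] d[of "(fst x, (snd x + M - 1) mod M)"]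
      by (cases x) (auto simp: abs_le_iff)
    show ?thesis
    proof (cases "x \<in> grid M")
      case True
      have "\<bar>psinv c (\<beta> x + k * nb M (R f) x) - psinv c (\<beta> x + k * nb M (R g) x)\<bar>
          \<le> \<bar>k * nb M (R f) x - k * nb M (R g) x\<bar> / c"
        using psinv_lip[OF c(1)] by (metis add_diff_cancel_left)
      also have "\<dots> = k * \<bar>nb M (R f) x - nb M (R g) x\<bar> / c"
        using assms by (simp add: abs_mult right_diff_distrib[symmetric])
      also have "\<dots> \<le> k * (4 * dist f g) / c"
        using nbd assms c by (intro divide_right_mono mult_left_mono) auto
      also have "\<dots> = q * dist f g" by (simp add: q_def)
      finally show ?thesis using True by (simp add: G_def)
    next
      case False
      then show ?thesis using q by (simp add: G_def)
    qed
    qed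
    show "dist (apply_bcontfun (T f) z) (apply_bcontfun (T g) z) \<le> q * dist f g"
      using Gd[of "of_discrete z"] q
      by (auto simp: Tapp E_def dist_real_def)
  qed
  obtain x where x: "T x = x" and xu: "\<And>y. T y = y \<Longrightarrow> y = x"
    using banach_fix_type[OF q, where f=T] contr by blast
  have eqv: "v \<in> Vh M \<and> (\<forall>p\<in>grid M. c * v p + v p ^ 3 = \<beta> p + k * nb M v p)
     \<longleftrightarrow> G M c k \<beta> v = v" for v
    unfolding Vh_def G_def fun_eq_iff using psinv_eq[OF c(1)] by (auto simp: psi_def)
  have ex: "R x \<in> Vh M \<and> (\<forall>p\<in>grid M. c * R x p + R x p ^ 3 = \<beta> p + k * nb M (R x) p)"
    using x RT eqv by metis
  show ?thesis unfolding c_def[symmetric]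
  proof (rule ex1I[of _ "R x"])
    show "R x \<in> Vh M \<and> (\<forall>p\<in>grid M. c * R x p + R x p ^ 3 = \<beta> p + k * nb M (R x) p)" by (fact ex)
  next
    fix v assume v: "v \<in> Vh M \<and> (\<forall>p\<in>grid M. c * v p + v p ^ 3 = \<beta> p + k * nb M v p)"
    then have Gv: "G M c k \<beta> v = v" using eqv by blast
    have "T (Bcontfun (E v)) = Bcontfun (E v)" unfolding T_def using Gv v RE[of v M] by simp
    then have "Bcontfun (E v) = x" by (rule xu)
    then show "v = R x" using RE v by metis
  qed
qed

lemma D2_affine: "D2 t n v us p = (1 + 2 * ratio t n) / (tau t n * (1 + ratio t n)) * v p + D2 t n (\<lambda>_. 0) us p"
proof (cases "n = 1")
  case True then show ?thesis unfolding D2_def ratio_def by (simp add: diff_divide_distrib)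
next
  case False then show ?thesis unfolding D2_def by (simp add: right_diff_distrib)
qed

lemma lap_nb: "p \<in> grid M \<Longrightarrow> lap_h M h v p = (nb M v p - 4 * v p) / h\<^sup>2"
  unfolding lap_h_def nb_def grid_def by (cases p) auto

theorem lemma3p2:
  fixes L \<epsilon> T :: real and M N :: nat and t :: "nat \<Rightarrow> real"
  assumes "L > 0" and "M > 0" and "\<epsilon> > 0"
    and "t 0 = 0" and "t N = T"
    and "\<And>k. 1 \<le> k \<Longrightarrow> k \<le> N \<Longrightarrow> t (k - 1) < t k"
    and "\<And>n. 1 \<le> n \<Longrightarrow> n \<le> N \<Longrightarrow>
           tau t n < (1 + 2 * ratio t n) / (1 + ratio t n)"
  shows "\<forall>n us. 1 \<le> n \<and> n \<le> N \<and> (\<forall>k<n. us k \<in> Vh M) \<longrightarrow>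
           (\<exists>!v. v \<in> Vh M \<and>
              (\<forall>p\<in>grid M. D2 t n v us p
                 = \<epsilon>\<^sup>2 * lap_h M (L / real M) v p - f_AC (v p)))"
proof (intro allI impI)
  fix n us assume n: "1 \<le> n \<and> n \<le> N \<and> (\<forall>k<n. us k \<in> Vh M)"
  define r where "r = ratio t n"
  define \<tau> where "\<tau> = tau t n"
  define a where "a = (1 + 2 * r) / (\<tau> * (1 + r))"
  define h where "h = L / real M"
  define k where "k = \<epsilon>\<^sup>2 / h\<^sup>2"
  define \<beta> where "\<beta> = (\<lambda>p. - D2 t n (\<lambda>_. 0) us p)"
  have tpos: "\<tau> > 0" using assms(6)[of n] n by (simp add: \<tau>_def tau_def)
  have rnn: "r \<ge> 0"
  proof (cases "n \<le> 1")
    case True then show ?thesis by (simp add: r_def ratio_def)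
  next
    case False
    have "1 \<le> n - 1" "n - 1 \<le> N" using False n by auto
    then have "t (n - 1 - 1) < t (n - 1)" using assms(6)[of "n - 1"] by blast
    then have "tau t (n - 1) > 0" by (simp add: tau_def)
    then show ?thesis using False tpos by (simp add: r_def ratio_def \<tau>_def)
  qed
  have "\<tau> < (1 + 2 * r) / (1 + r)" using assms(7)[of n] n by (simp add: r_def \<tau>_def)
  then have "\<tau> * (1 + r) < 1 + 2 * r" using rnn by (simp add: field_simps)
  moreover have "\<tau> * (1 + r) > 0" using tpos rnn by simp
  ultimately have a1: "a > 1" unfolding a_def by (simp add: less_divide_eq)
  have k0: "k \<ge> 0" unfolding k_def by simp
  have eq: "(D2 t n v us p = \<epsilon>\<^sup>2 * lap_h M (L / real M) v p - f_AC (v p)) \<longleftrightarrow>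
     ((a - 1 + 4*k) * v p + v p ^ 3 = \<beta> p + k * nb M v p)" if p: "p \<in> grid M" for v p
  proof -
    have "\<epsilon>\<^sup>2 * lap_h M (L / real M) v p = k * nb M v p - 4 * k * v p"
      unfolding lap_nb[OF p] k_def h_def[symmetric] by (simp add: diff_divide_distrib right_diff_distrib)
    moreover have "D2 t n v us p = a * v p - \<beta> p"
      using D2_affine[of t n v us p] by (simp add: a_def \<beta>_def r_def \<tau>_def)
    ultimately show ?thesis unfolding f_AC_def by (auto simp: algebra_simps)
  qed
  show "\<exists>!v. v \<in> Vh M \<and>
              (\<forall>p\<in>grid M. D2 t n v us p
                 = \<epsilon>\<^sup>2 * lap_h M (L / real M) v p - f_AC (v p))"
    using solv[OF a1 k0, of M \<beta>] eq by (simp cong: conj_cong)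
qed

end
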